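(* Consider the online convex optimization setting with stochastic gradients described in the context, and suppose Algorithm 1 is given oracle access to $N$ copies of a high-probability online linear optimizer with regret $R_{\mathcal A}(T)$. Then for any $\rho\in(0,1)$ and any sequence of convex losses $\ell_1,\dots,\ell_T\in\mathcal L$ over $\mathcal K$, with probability at least $1-\rho$, \[ \sum_{t=1}^T\ell_t(x_t)-\inf_{x^*\in\mathcal K}\sum_{t=1}^T\ell_t(x^* )\le\frac{2\beta D^2T}{N}+R_{\mathcal A}(T)+(\sigma+G)D\sqrt{2T\log(4N/\rho)}. \]
   Context: Let $\mathcal K\subset\mathbb R^d$ be a compact convex set of diameter $D$ (i.e. $\|x-x'\|\le D$ for all $x,x'\in\mathcal K$). A class $\mathcal L$ of convex functions on $\mathcal K$ is given; the losses $\ell_1,\dots,\ell_T\in\mathcal L$ are fixed in advance (oblivious adversary). Let $G$ bound $\|\nabla\ell(x)\|$ for all $\ell\in\mathcal L$, $x\in\mathcal K$. Assumptions: (A1) every $\ell\in\mathcal L$ is $\beta$-smooth: $\|\nabla\ell(x)-\nabla\ell(x')\|\le\beta\|x-x'\|$ for all $x,x'\in\mathcal K$; (A2) a stochastic gradient oracle $\mathcal O$, queried at round $t$ at a point $x\in\mathcal K$, returns a random vector $\mathbf g$ (using fresh randomness) with $\mathbb E[\mathbf g]=\nabla\ell_t(x)$ and $\|\mathbf g\|^2\le\sigma^2$. A high-probability online linear optimizer (OLO) over $\mathcal K$ is an online algorithm which at each round outputs a point of $\mathcal K$ based on the linear losses $\ell'_s(x)=g_s^\top x$ revealed in previous rounds,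 such that for any $\rho'\in(0,1)$ and any sequence of linear losses, with probability at least $1-\rho'$ its regret $\sum_{t}\ell'_t(x_t)-\min_{x\in\mathcal K}\sum_t\ell'_t(x)$ is at most $R_{\mathcal A}(T)$, sublinear in $T$. Algorithm 1: maintain $N$ OLOs $\mathcal A_1,\dots,\mathcal A_N$ and step sizes $\eta_i=\frac{2}{i+1}$. At each round $t=1,\dots,T$: set $\mathbf x_t^0=\mathbf 0$; for $i=1,\dots,N$: let $x_{t,i}\in\mathcal K$ be the output of $\mathcal A_i$ at round $t$ (having seen $\ell^i_1,\dots,\ell^i_{t-1}$), set $\mathbf x_t^i=(1-\eta_i)\mathbf x_t^{i-1}+\eta_i x_{t,i}$, query the oracle at $\mathbf x_t^{i-1}$ to get $\mathbf g_{t,i}$ with $\mathbb E[\mathbf g_{t,i}]=\nabla\ell_t(\mathbf x_t^{i-1})$, and pass the linear loss $\ell_t^i(x)=\mathbf g_{t,i}^\top x$ to $\mathcal A_i$. The prediction is $x_t=\mathbf x_t^N$, and the loss $\ell_t(x_t)$ is incurred. *)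

theory Defs
  imports "HOL-Probability.Probability"
begin

text \<open>Rounds are indexed t = 1..T, online linear optimizers (OLOs) i = 1..N.\<close>

definition with_prob_at_least :: "'m measure \<Rightarrow> real \<Rightarrow> ('m \<Rightarrow> bool) \<Rightarrow> bool" where
  "with_prob_at_least M p P \<longleftrightarrow> (\<exists>E\<in>sets M. measure M E \<ge> p \<and> (\<forall>\<omega>\<in>E. P \<omega>))"

definition olo_regret :: "'a::euclidean_space set \<Rightarrow> (nat \<Rightarrow> 'a) \<Rightarrow> (nat \<Rightarrow> 'a) \<Rightarrow> nat \<Rightarrow> real" where
  "olo_regret K g x n = (\<Sum>t=1..n. g t \<bullet> x t) - (INF y\<in>K. \<Sum>t=1..n. g t \<bullet> y)"

text \<open>A (randomized) OLO is a map A r t g: internal random seed r, round t, the sequence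
  of loss vectors g; its output at round t may only depend on g 1, ..., g (t-1).\<close>
definition olo_causal :: "('r \<Rightarrow> nat \<Rightarrow> (nat \<Rightarrow> 'a) \<Rightarrow> 'a) \<Rightarrow> bool" where
  "olo_causal A \<longleftrightarrow> (\<forall>r t g g'. (\<forall>s\<in>{1..<t}. g s = g' s) \<longrightarrow> A r t g = A r t g')"

text \<open>High-probability OLO over K with regret R, whose seed is the random variable U.
  The guarantee is required for loss vectors of norm bounded by sigma
  (the bound the stochastic oracle provides).\<close>
definition hp_olo :: "'m measure \<Rightarrow> 'a::euclidean_space set \<Rightarrow> real \<Rightarrow>
    ('r \<Rightarrow> nat \<Rightarrow> (nat \<Rightarrow> 'a) \<Rightarrow> 'a) \<Rightarrow> ('m \<Rightarrow> 'r) \<Rightarrow> (nat \<Rightarrow> real) \<Rightarrow> bool" where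
  "hp_olo M K \<sigma> A U R \<longleftrightarrow>
     (\<forall>r t g. A r t g \<in> K) \<and> olo_causal A \<and>
     (\<forall>n \<rho>' g. 0 < \<rho>' \<and> \<rho>' < 1 \<and> (\<forall>s\<in>{1..n}. (norm (g s))\<^sup>2 \<le> \<sigma>\<^sup>2) \<longrightarrow>
        with_prob_at_least M (1 - \<rho>') (\<lambda>\<omega>. olo_regret K g (\<lambda>t. A (U \<omega>) t g) n \<le> R n))"

definition fw_step :: "nat \<Rightarrow> real" where
  "fw_step i = 2 / (real i + 1)"

text \<open>Algorithm 1 for a realisation of the randomness: u i is the seed of OLO i,
  z t i the oracle noise of the query made for OLO i in round t, orc t x w the oracle
  answer in round t at point x with noise w. meta_fw A orc u z i t is the iterate x_t^i;
  the loss vector fed to OLO i in round s is orc s (x_s^(i-1)) (z s i).\<close>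
primrec meta_fw :: "('r \<Rightarrow> nat \<Rightarrow> (nat \<Rightarrow> 'a) \<Rightarrow> 'a) \<Rightarrow> (nat \<Rightarrow> 'a \<Rightarrow> 'r \<Rightarrow> 'a) \<Rightarrow>
    (nat \<Rightarrow> 'r) \<Rightarrow> (nat \<Rightarrow> nat \<Rightarrow> 'r) \<Rightarrow> nat \<Rightarrow> nat \<Rightarrow> 'a::real_vector" where
  "meta_fw A orc u z 0 t = 0"
| "meta_fw A orc u z (Suc i) t =
     (1 - fw_step (Suc i)) *\<^sub>R meta_fw A orc u z i t
     + fw_step (Suc i) *\<^sub>R A (u (Suc i)) t (\<lambda>s. orc s (meta_fw A orc u z i s) (z s (Suc i)))"

end

theory Submission
  imports Defs "HOL-Probability.Probability"
begin

lemma path_deriv: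
  fixes K :: "'a::euclidean_space set" and f :: "'a \<Rightarrow> real"
  assumes K: "convex K" and x: "x \<in> K" and y: "y \<in> K"
    and der: "\<forall>z\<in>K. (f has_derivative (\<lambda>h. gr z \<bullet> h)) (at z within K)"
    and s: "s \<in> {0..1}"
  shows "((\<lambda>s. f (x + s *\<^sub>R (y - x))) has_derivative (\<lambda>h. h * (gr (x + s *\<^sub>R (y - x)) \<bullet> (y - x)))) (at s within {0..1})"
proof -
  have sub: "(\<lambda>s. x + s *\<^sub>R (y - x)) ` {0..1} \<subseteq> K"
  proof
    fix z assume "z \<in> (\<lambda>s. x + s *\<^sub>R (y - x)) ` {0..1::real}"
    then obtain t where t: "t \<in> {0..1}" "z = x + t *\<^sub>R (y - x)" by auto
    have "z = (1 - t) *\<^sub>R x + t *\<^sub>R y" using t by (simp add: algebra_simps)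
    then show "z \<in> K" using K x y t by (auto intro: convexD)
  qed
  have pd: "((\<lambda>s. x + s *\<^sub>R (y - x)) has_derivative (\<lambda>h. h *\<^sub>R (y - x))) (at s within {0..1})"
    by (auto intro!: derivative_eq_intros)
  have "((\<lambda>s. f (x + s *\<^sub>R (y - x))) has_derivative (\<lambda>h. gr (x + s *\<^sub>R (y - x)) \<bullet> (h *\<^sub>R (y - x)))) (at s within {0..1})"
    by (rule has_derivative_in_compose2[OF _ sub s pd]) (use der in auto)
  then show ?thesis by (simp add: mult.commute)
qed

lemma descent_and_tangent:
  fixes K :: "'a::euclidean_space set" and f :: "'a \<Rightarrow> real"
  assumes K: "convex K" and x: "x \<in> K" and y: "y \<in> K"
    and der: "\<forall>z\<in>K. (f has_derivative (\<lambda>h. gr z \<bullet> h)) (at z within K)"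
    and lip: "\<forall>z\<in>K. \<forall>z'\<in>K. norm (gr z - gr z') \<le> \<beta> * norm (z - z')"
    and b: "0 \<le> \<beta>"
  shows "f y \<le> f x + gr x \<bullet> (y - x) + \<beta> / 2 * (norm (y - x))\<^sup>2"
    and "convex_on K f \<Longrightarrow> f x + gr x \<bullet> (y - x) \<le> f y"
proof -
  define p where "p = (\<lambda>s::real. x + s *\<^sub>R (y - x))"
  have pK: "p s \<in> K" if "s \<in> {0..1}" for s
  proof -
    have "p s = (1 - s) *\<^sub>R x + s *\<^sub>R y" by (simp add: p_def algebra_simps)
    then show ?thesis using K x y that by (auto intro: convexD)
  qed
  have p0: "p 0 = x" and p1: "p 1 = y" by (auto simp: p_def)
  have gdiff: "\<bar>gr (p s) \<bullet> (y - x) - gr x \<bullet> (y - x)\<bar> \<le> \<beta> * s * (norm (y - x))\<^sup>2" if "s \<in> {0..1}" for s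
  proof -
    have "\<bar>gr (p s) \<bullet> (y - x) - gr x \<bullet> (y - x)\<bar> = \<bar>(gr (p s) - gr x) \<bullet> (y - x)\<bar>"
      by (simp add: inner_diff_left)
    also have "\<dots> \<le> norm (gr (p s) - gr x) * norm (y - x)" by (rule Cauchy_Schwarz_ineq2)
    also have "\<dots> \<le> (\<beta> * norm (p s - x)) * norm (y - x)"
      using lip pK[OF that] x by (intro mult_right_mono) auto
    also have "norm (p s - x) = s * norm (y - x)" using that by (simp add: p_def)
    finally show ?thesis by (simp add: power2_eq_square mult_ac)
  qed
  define c where "c = (norm (y - x))\<^sup>2"
  have c0: "c \<ge> 0" by (simp add: c_def)
  have dphi: "((\<lambda>s. f (p s)) has_derivative (\<lambda>h. h * (gr (p s) \<bullet> (y - x)))) (at s within {0..1})"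
    if "s \<in> {0..1}" for s
    unfolding p_def by (rule path_deriv[OF K x y der that])
  define \<psi> where "\<psi> = (\<lambda>s. f (p s) - s * (gr x \<bullet> (y - x)) - \<beta> / 2 * c * s\<^sup>2)"
  have dpsi: "(\<psi> has_derivative (\<lambda>h. h * (gr (p s) \<bullet> (y - x) - gr x \<bullet> (y - x) - \<beta> * c * s))) (at s within {0..1})"
    if "s \<in> {0..1}" for s
    unfolding \<psi>_def
    by (rule derivative_eq_intros dphi[OF that] refl)+ (simp add: algebra_simps)
  obtain \<xi> where \<xi>: "\<xi> \<in> {0..1}" and eq: "\<psi> 1 - \<psi> 0 = (1 - 0) * (gr (p \<xi>) \<bullet> (y - x) - gr x \<bullet> (y - x) - \<beta> * c * \<xi>)"
    using mvt_very_simple[of 0 1 \<psi>, OF _ dpsi] by auto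
  have "gr (p \<xi>) \<bullet> (y - x) - gr x \<bullet> (y - x) \<le> \<beta> * c * \<xi>"
    using gdiff[OF \<xi>] by (simp add: c_def mult_ac)
  then have "\<psi> 1 \<le> \<psi> 0" using eq by simp
  then show "f y \<le> f x + gr x \<bullet> (y - x) + \<beta> / 2 * (norm (y - x))\<^sup>2"
    by (simp add: \<psi>_def p0 p1 c_def)
  assume cvx: "convex_on K f"
  show "f x + gr x \<bullet> (y - x) \<le> f y"
  proof (rule field_le_epsilon)
    fix e :: real assume e: "0 < e"
    define s where "s = (if \<beta> * c = 0 then 1 else min 1 (e / (\<beta> * c)))"
    have s01: "s \<in> {0<..1}" using e b c0 by (auto simp: s_def)
    have bcs: "\<beta> * c * s \<le> e"
    proof (cases "\<beta> * c = 0")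
      case True then show ?thesis using e by (auto simp: s_def)
    next
      case False
      then have "\<beta> * c > 0" using b c0 by (simp add: less_le)
      then have "\<beta> * c * s \<le> \<beta> * c * (e / (\<beta> * c))"
        unfolding s_def using False by (intro mult_left_mono) auto
      then show ?thesis using False by simp
    qed
    have ds: "\<And>t. t \<in> {0..s} \<Longrightarrow> ((\<lambda>s. f (p s)) has_derivative (\<lambda>h. h * (gr (p t) \<bullet> (y - x)))) (at t within {0..s})"
      by (rule has_derivative_subset[OF dphi]) (use s01 in auto)
    obtain \<xi> where \<xi>: "\<xi> \<in> {0..s}" and eq: "f (p s) - f (p 0) = (s - 0) * (gr (p \<xi>) \<bullet> (y - x))"
      using mvt_very_simple[of 0 s "\<lambda>s. f (p s)", OF _ ds] s01 by auto
    have "gr x \<bullet> (y - x) - \<beta> * \<xi> * c \<le> gr (p \<xi>) \<bullet> (y - x)"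
      using gdiff[of \<xi>] \<xi> s01 by (auto simp: c_def)
    moreover have "\<beta> * \<xi> * c \<le> \<beta> * s * c" using \<xi> b c0 by (intro mult_right_mono mult_left_mono) auto
    ultimately have lo: "gr x \<bullet> (y - x) - \<beta> * c * s \<le> gr (p \<xi>) \<bullet> (y - x)" by (simp add: mult_ac)
    have "f (p s) \<le> (1 - s) * f x + s * f y"
    proof -
      have "p s = (1 - s) *\<^sub>R x + s *\<^sub>R y" by (simp add: p_def algebra_simps)
      then show ?thesis using convex_onD[OF cvx, of s x y] s01 x y by auto
    qed
    then have "s * (gr (p \<xi>) \<bullet> (y - x)) \<le> s * (f y - f x)" using eq p0 by (simp add: algebra_simps)
    then have "gr (p \<xi>) \<bullet> (y - x) \<le> f y - f x" using s01 by simp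
    with lo bcs show "f x + gr x \<bullet> (y - x) \<le> f y + e" by linarith
  qed
qed

lemma fw_step_simps: "fw_step (Suc i) = 2 / (real i + 2)" "0 \<le> fw_step (Suc i)" "fw_step (Suc i) \<le> 1"
  by (auto simp: fw_step_def)

lemma meta_fw_in_K:
  assumes "convex K" "0 \<in> K" "\<forall>r t g. A r t g \<in> K"
  shows "meta_fw A orc u z i t \<in> K"
proof (induction i)
  case 0 then show ?case using assms by simp
next
  case (Suc i)
  then show ?case using assms fw_step_simps[of i]
    by (auto intro!: convexD_alt)
qed

lemma rec_bound:
  fixes \<Delta> :: "nat \<Rightarrow> real"
  assumes rec: "\<And>i. Suc i \<le> n \<Longrightarrow> \<Delta> (Suc i) \<le> (1 - 2 / (real i + 2)) * \<Delta> i + 2 / (real i + 2) * B + (2 / (real i + 2))\<^sup>2 * C"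
    and C: "0 \<le> C"
  shows "Suc i \<le> n \<Longrightarrow> \<Delta> (Suc i) \<le> B + 4 * C / (real i + 2)"
proof (induction i)
  case 0 then show ?case using rec[of 0] C by simp
next
  case (Suc i)
  define a where "a = real i"
  have a: "a \<ge> 0" by (simp add: a_def)
  define \<eta> where "\<eta> = 2 / (a + 3)"
  have r: "\<Delta> (Suc (Suc i)) \<le> (1 - \<eta>) * \<Delta> (Suc i) + \<eta> * B + \<eta>\<^sup>2 * C"
    using rec[of "Suc i"] Suc.prems by (simp add: a_def \<eta>_def add.commute)
  have e: "(1 - \<eta>) * \<Delta> (Suc i) + \<eta> * B + \<eta>\<^sup>2 * C - B = (1 - \<eta>) * (\<Delta> (Suc i) - B) + \<eta>\<^sup>2 * C"
    by algebra
  have IH: "\<Delta> (Suc i) - B \<le> 4 * C / (a + 2)" using Suc by (simp add: a_def add.commute)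
  have "\<Delta> (Suc (Suc i)) - B \<le> (1 - \<eta>) * (\<Delta> (Suc i) - B) + \<eta>\<^sup>2 * C"
    using r e by linarith
  also have "\<dots> \<le> (1 - 2 / (a + 3)) * (4 * C / (a + 2)) + (2 / (a + 3))\<^sup>2 * C"
    unfolding \<eta>_def using IH a by (intro add_mono mult_left_mono) (auto simp: field_simps)
  also have "\<dots> \<le> 4 * C / (a + 3)"
  proof -
    have "(1 - 2 / (a + 3)) * (4 * C / (a + 2)) + (2 / (a + 3))\<^sup>2 * C
          = 4 * C * ((a + 1) / ((a + 3) * (a + 2)) + 1 / (a + 3)\<^sup>2)"
      using a by (simp add: field_simps power2_eq_square)
    also have "(a + 1) / ((a + 3) * (a + 2)) + 1 / (a + 3)\<^sup>2 \<le> 1 / (a + 3)"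
    proof -
      have p: "a + 3 \<noteq> 0" "a + 2 \<noteq> 0" using a by auto
      have q: "1/(a+3) = (a+2)/((a+3)*(a+2))" using p by simp
      have h1: "1/(a+3) - (a+1)/((a+3)*(a+2)) = 1/((a+3)*(a+2))"
        unfolding q diff_divide_distrib[symmetric] by simp
      have h2: "1/(a+3)^2 \<le> 1/((a+3)*(a+2))" using a unfolding power2_eq_square
        by (intro divide_left_mono mult_left_mono mult_pos_pos) auto
      show ?thesis using h1 h2 by linarith
    qed
    then have "4 * C * ((a + 1) / ((a + 3) * (a + 2)) + 1 / (a + 3)\<^sup>2) \<le> 4 * C * (1 / (a + 3))"
      using C by (intro mult_left_mono) auto
    finally show ?thesis by simp
  qed
  finally show ?case by (simp add: a_def add.commute)
qed

lemma sum_lincomb: "(\<Sum>t\<in>A. a * P t + b * Q t + c) = a * sum P A + b * sum Q A + real (card A) * (c::real)"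
  by (simp add: sum.distrib sum_distrib_left)

lemma fw_bound:
  fixes K :: "'a::euclidean_space set" and loss :: "nat \<Rightarrow> 'a \<Rightarrow> real" and grad :: "nat \<Rightarrow> 'a \<Rightarrow> 'a"
  assumes K: "convex K" "0 \<in> K" and AK: "\<forall>r t g. A r t g \<in> K"
    and diam: "\<forall>x\<in>K. \<forall>x'\<in>K. norm (x - x') \<le> D"
    and loss_convex: "\<forall>t\<in>{1..T}. convex_on K (loss t)"
    and loss_grad: "\<forall>t\<in>{1..T}. \<forall>x\<in>K. (loss t has_derivative (\<lambda>h. grad t x \<bullet> h)) (at x within K)"
    and smooth: "0 \<le> \<beta>" "\<forall>t\<in>{1..T}. \<forall>x\<in>K. \<forall>x'\<in>K. norm (grad t x - grad t x') \<le> \<beta> * norm (x - x')"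
    and xs: "xs \<in> K"
    and hyp: "\<forall>i. Suc i \<le> N \<longrightarrow> (\<Sum>t=1..T. grad t (meta_fw A orc u z i t) \<bullet>
        (A (u (Suc i)) t (\<lambda>s. orc s (meta_fw A orc u z i s) (z s (Suc i))) - xs)) \<le> B"
    and N: "N \<ge> 1"
  shows "(\<Sum>t=1..T. loss t (meta_fw A orc u z N t)) - (\<Sum>t=1..T. loss t xs) \<le> B + 2 * \<beta> * D\<^sup>2 * real T / real N"
proof -
  define x where "x = meta_fw A orc u z"
  define y where "y = (\<lambda>i t. A (u (Suc i)) t (\<lambda>s. orc s (x i s) (z s (Suc i))))"
  define \<Delta> where "\<Delta> = (\<lambda>i. (\<Sum>t=1..T. loss t (x i t)) - (\<Sum>t=1..T. loss t xs))"
  define C where "C = \<beta> * D\<^sup>2 * real T / 2"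
  have xK: "x i t \<in> K" for i t unfolding x_def by (rule meta_fw_in_K[OF K AK])
  have yK: "y i t \<in> K" for i t unfolding y_def using AK by auto
  have step: "loss t (x (Suc i) t) - loss t xs \<le> (1 - 2 / (real i + 2)) * (loss t (x i t) - loss t xs)
      + 2 / (real i + 2) * (grad t (x i t) \<bullet> (y i t - xs)) + (2 / (real i + 2))\<^sup>2 * (\<beta> * D\<^sup>2 / 2)"
    if t: "t \<in> {1..T}" for t i
  proof -
    define \<eta> where "\<eta> = 2 / (real i + 2)"
    have \<eta>: "0 \<le> \<eta>" "\<eta> \<le> 1" by (auto simp: \<eta>_def)
    have xS: "x (Suc i) t = (1 - \<eta>) *\<^sub>R x i t + \<eta> *\<^sub>R y i t"
      by (simp add: x_def y_def \<eta>_def fw_step_def add.commute)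
    have d: "x (Suc i) t - x i t = \<eta> *\<^sub>R (y i t - x i t)" by (simp add: xS algebra_simps)
    have desc: "loss t (x (Suc i) t) \<le> loss t (x i t) + grad t (x i t) \<bullet> (x (Suc i) t - x i t)
        + \<beta> / 2 * (norm (x (Suc i) t - x i t))\<^sup>2"
      by (rule descent_and_tangent(1)[OF K(1) xK xK]) (use loss_grad smooth t in auto)
    have tang: "loss t (x i t) + grad t (x i t) \<bullet> (xs - x i t) \<le> loss t xs"
      by (rule descent_and_tangent(2)[OF K(1) xK xs]) (use loss_grad smooth loss_convex t in auto)
    have nrm: "(norm (x (Suc i) t - x i t))\<^sup>2 \<le> \<eta>\<^sup>2 * D\<^sup>2"
    proof -
      have "norm (x (Suc i) t - x i t) = \<eta> * norm (y i t - x i t)" using d \<eta> by simp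
      also have "\<dots> \<le> \<eta> * D" using diam yK xK \<eta> by (intro mult_left_mono) auto
      finally have "norm (x (Suc i) t - x i t) \<le> \<eta> * D" .
      then have "(norm (x (Suc i) t - x i t))\<^sup>2 \<le> (\<eta> * D)\<^sup>2" by (intro power_mono) auto
      then show ?thesis by (simp add: power_mult_distrib)
    qed
    have "grad t (x i t) \<bullet> (x (Suc i) t - x i t) = \<eta> * (grad t (x i t) \<bullet> (y i t - xs)) + \<eta> * (grad t (x i t) \<bullet> (xs - x i t))"
      by (simp add: d inner_diff_right algebra_simps)
    moreover have "\<eta> * (grad t (x i t) \<bullet> (xs - x i t)) \<le> \<eta> * (loss t xs - loss t (x i t))"
      using tang \<eta> by (intro mult_left_mono) auto
    moreover have "\<beta> / 2 * (norm (x (Suc i) t - x i t))\<^sup>2 \<le> \<beta> / 2 * (\<eta>\<^sup>2 * D\<^sup>2)"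
      using nrm smooth by (intro mult_left_mono) auto
    ultimately show ?thesis using desc unfolding \<eta>_def[symmetric] by (simp add: algebra_simps)
  qed

  have rec: "\<Delta> (Suc i) \<le> (1 - 2 / (real i + 2)) * \<Delta> i + 2 / (real i + 2) * B + (2 / (real i + 2))\<^sup>2 * C"
    if si: "Suc i \<le> N" for i
  proof -
    have "\<Delta> (Suc i) = (\<Sum>t=1..T. loss t (x (Suc i) t) - loss t xs)" by (simp add: \<Delta>_def sum_subtractf)
    also have "\<dots> \<le> (\<Sum>t=1..T. (1 - 2 / (real i + 2)) * (loss t (x i t) - loss t xs)
      + 2 / (real i + 2) * (grad t (x i t) \<bullet> (y i t - xs)) + (2 / (real i + 2))\<^sup>2 * (\<beta> * D\<^sup>2 / 2))"
      by (rule sum_mono) (rule step)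
    also have "\<dots> = (1 - 2 / (real i + 2)) * \<Delta> i + 2 / (real i + 2) * (\<Sum>t=1..T. grad t (x i t) \<bullet> (y i t - xs)) + (2 / (real i + 2))\<^sup>2 * C"
      unfolding sum_lincomb by (simp add: \<Delta>_def C_def sum_subtractf)
    also have "\<dots> \<le> (1 - 2 / (real i + 2)) * \<Delta> i + 2 / (real i + 2) * B + (2 / (real i + 2))\<^sup>2 * C"
    proof -
      have "(\<Sum>t=1..T. grad t (x i t) \<bullet> (y i t - xs)) \<le> B" using hyp si by (simp add: x_def y_def)
      then show ?thesis by (intro add_mono mult_left_mono order_refl) auto
    qed
    finally show ?thesis .
  qed
  have C0: "0 \<le> C" using smooth by (simp add: C_def)
  obtain n where n: "N = Suc n" using N by (cases N) auto
  have "\<Delta> N \<le> B + 4 * C / (real n + 2)"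
    using rec_bound[where n=N and i=n, OF rec C0] n by simp
  also have "4 * C / (real n + 2) \<le> 2 * \<beta> * D\<^sup>2 * real T / real N"
    using C0 by (simp add: C_def n field_simps)
  finally show ?thesis by (simp add: \<Delta>_def x_def)
qed

lemma meta_fw_local:
  assumes c: "olo_causal A" and u: "\<forall>j\<in>{1..i}. u j = u' j"
    and z: "\<forall>s\<in>{1..<t}. \<forall>j\<in>{1..i}. z s j = z' s j" and t': "t' \<le> t"
  shows "meta_fw A orc u z i t' = meta_fw A orc u' z' i t'"
  using u z t'
proof (induction i arbitrary: t')
  case 0 then show ?case by simp
next
  case (Suc i)
  have IH: "meta_fw A orc u z i s = meta_fw A orc u' z' i s" if "s \<le> t" for s
    using Suc.IH[of s] Suc.prems that by auto
  have "A (u (Suc i)) t' (\<lambda>s. orc s (meta_fw A orc u z i s) (z s (Suc i)))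
      = A (u (Suc i)) t' (\<lambda>s. orc s (meta_fw A orc u' z' i s) (z' s (Suc i)))"
    using c unfolding olo_causal_def
  proof (intro allI impI c[unfolded olo_causal_def, rule_format] ballI)
    fix s assume s: "s \<in> {1..<t'}"
    then show "orc s (meta_fw A orc u z i s) (z s (Suc i)) = orc s (meta_fw A orc u' z' i s) (z' s (Suc i))"
      using IH[of s] Suc.prems s by auto
  qed
  moreover have "u (Suc i) = u' (Suc i)" using Suc.prems by auto
  ultimately show ?case using IH[of t'] Suc.prems by simp
qed

lemma meta_fw_meas:
  fixes A :: "'r \<Rightarrow> nat \<Rightarrow> (nat \<Rightarrow> 'a::euclidean_space) \<Rightarrow> 'a"
  assumes orc_meas: "\<forall>t. (\<lambda>(x, w). orc t x w) \<in> borel \<Otimes>\<^sub>M S \<rightarrow>\<^sub>M borel"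
    and A_meas: "\<forall>t. (\<lambda>(r, g). A r t g) \<in> S \<Otimes>\<^sub>M PiM UNIV (\<lambda>_::nat. borel) \<rightarrow>\<^sub>M borel"
    and u: "\<forall>i. (\<lambda>\<omega>. u \<omega> i) \<in> M \<rightarrow>\<^sub>M S" and z: "\<forall>s i. (\<lambda>\<omega>. z \<omega> s i) \<in> M \<rightarrow>\<^sub>M S"
  shows "(\<lambda>\<omega>. meta_fw A orc (u \<omega>) (z \<omega>) i t) \<in> borel_measurable M"
proof (induction i arbitrary: t)
  case 0 then show ?case by simp
next
  case (Suc i)
  have seq: "(\<lambda>\<omega>. (\<lambda>s. orc s (meta_fw A orc (u \<omega>) (z \<omega>) i s) (z \<omega> s (Suc i)))) \<in> M \<rightarrow>\<^sub>M PiM UNIV (\<lambda>_::nat. borel)"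
  proof (rule measurable_PiM_single')
    fix s :: nat
    have "(\<lambda>\<omega>. (meta_fw A orc (u \<omega>) (z \<omega>) i s, z \<omega> s (Suc i))) \<in> M \<rightarrow>\<^sub>M borel \<Otimes>\<^sub>M S"
      using Suc.IH z by (intro measurable_Pair) auto
    from measurable_comp[OF this orc_meas[rule_format, of s]]
    show "(\<lambda>\<omega>. orc s (meta_fw A orc (u \<omega>) (z \<omega>) i s) (z \<omega> s (Suc i))) \<in> borel_measurable M"
      by (simp add: comp_def)
  qed (auto simp: space_PiM)
  have "(\<lambda>\<omega>. (u \<omega> (Suc i), (\<lambda>s. orc s (meta_fw A orc (u \<omega>) (z \<omega>) i s) (z \<omega> s (Suc i))))) \<in> M \<rightarrow>\<^sub>M S \<Otimes>\<^sub>M PiM UNIV (\<lambda>_::nat. borel)"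
    using u seq by (intro measurable_Pair) auto
  from measurable_comp[OF this A_meas[rule_format, of t]]
  have "(\<lambda>\<omega>. A (u \<omega> (Suc i)) t (\<lambda>s. orc s (meta_fw A orc (u \<omega>) (z \<omega>) i s) (z \<omega> s (Suc i)))) \<in> borel_measurable M"
    by (simp add: comp_def)
  then show ?case using Suc.IH[of t] by (auto intro!: borel_measurable_add borel_measurable_scaleR)
qed

lemma (in prob_space) indep_nn_integral_iter:
  assumes ind: "indep_var N1 Y N2 Z" and h: "h \<in> borel_measurable (N1 \<Otimes>\<^sub>M N2)"
  shows "(\<integral>\<^sup>+\<omega>. h (Y \<omega>, Z \<omega>) \<partial>M) = (\<integral>\<^sup>+\<omega>. (\<integral>\<^sup>+\<omega>'. h (Y \<omega>, Z \<omega>') \<partial>M) \<partial>M)"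
proof -
  have rvY: "random_variable N1 Y" and rvZ: "random_variable N2 Z"
    and eq: "distr M N1 Y \<Otimes>\<^sub>M distr M N2 Z = distr M (N1 \<Otimes>\<^sub>M N2) (\<lambda>x. (Y x, Z x))"
    using ind unfolding indep_var_distribution_eq by auto
  interpret PY: prob_space "distr M N1 Y" by (rule prob_space_distr[OF rvY])
  interpret PZ: prob_space "distr M N2 Z" by (rule prob_space_distr[OF rvZ])
  have h': "h \<in> borel_measurable (distr M N1 Y \<Otimes>\<^sub>M distr M N2 Z)"
    using h by (simp cong: measurable_cong_sets)
  have mY: "(\<lambda>y. \<integral>\<^sup>+z. h (y, z) \<partial>distr M N2 Z) \<in> borel_measurable (distr M N1 Y)"
    by (rule PZ.borel_measurable_nn_integral_fst[OF h'])
  have "(\<integral>\<^sup>+\<omega>. h (Y \<omega>, Z \<omega>) \<partial>M) = (\<integral>\<^sup>+p. h p \<partial>distr M (N1 \<Otimes>\<^sub>M N2) (\<lambda>x. (Y x, Z x)))"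
    by (rule nn_integral_distr[symmetric]) (use rvY rvZ h in auto)
  also have "\<dots> = (\<integral>\<^sup>+p. h p \<partial>(distr M N1 Y \<Otimes>\<^sub>M distr M N2 Z))" by (simp add: eq)
  also have "\<dots> = (\<integral>\<^sup>+y. (\<integral>\<^sup>+z. h (y, z) \<partial>distr M N2 Z) \<partial>distr M N1 Y)"
    by (rule PZ.nn_integral_fst[symmetric, OF h'])
  also have "\<dots> = (\<integral>\<^sup>+\<omega>. (\<integral>\<^sup>+z. h (Y \<omega>, z) \<partial>distr M N2 Z) \<partial>M)"
    using mY by (rule nn_integral_distr[OF rvY])
  also have "\<dots> = (\<integral>\<^sup>+\<omega>. (\<integral>\<^sup>+\<omega>'. h (Y \<omega>, Z \<omega>') \<partial>M) \<partial>M)"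
  proof (rule nn_integral_cong)
    fix \<omega> assume "\<omega> \<in> space M"
    then have "Y \<omega> \<in> space N1" using rvY by (auto simp: measurable_def)
    then have "(\<lambda>z. h (Y \<omega>, z)) \<in> borel_measurable N2" using h by (rule measurable_compose_Pair1)
    then show "(\<integral>\<^sup>+z. h (Y \<omega>, z) \<partial>distr M N2 Z) = (\<integral>\<^sup>+\<omega>'. h (Y \<omega>, Z \<omega>') \<partial>M)"
      by (intro nn_integral_distr[OF rvZ]) (simp cong: measurable_cong_sets)
  qed
  finally show ?thesis .
qed

lemma ext_meas:
  assumes c0: "c0 \<in> space S"
  shows "(\<lambda>\<xi>. \<lambda>j. if j \<in> B then \<xi> j else c0) \<in> PiM B (\<lambda>_. S) \<rightarrow>\<^sub>M PiM UNIV (\<lambda>_. S)"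
proof (rule measurable_PiM_single')
  fix j
  show "(\<lambda>\<xi>. if j \<in> B then \<xi> j else c0) \<in> PiM B (\<lambda>_. S) \<rightarrow>\<^sub>M S"
    by (cases "j \<in> B") (auto simp: c0)
qed (auto simp: space_PiM c0 PiE_iff)

lemma (in prob_space) indep_split:
  assumes ind: "indep_vars (\<lambda>_. S) X I" and i0: "i0 \<in> I" and c0: "c0 \<in> space S"
  shows "indep_var (PiM UNIV (\<lambda>_. S)) (\<lambda>\<omega>. \<lambda>j. if j \<in> I - {i0} then X j \<omega> else c0)
                   (PiM UNIV (\<lambda>_. S)) (\<lambda>\<omega>. \<lambda>j. if j \<in> {i0} then X j \<omega> else c0)"
proof -
  have iv: "indep_var (PiM (I - {i0}) (\<lambda>_. S)) (\<lambda>\<omega>. restrict (\<lambda>i. X i \<omega>) (I - {i0}))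
                     (PiM {i0} (\<lambda>_. S)) (\<lambda>\<omega>. restrict (\<lambda>i. X i \<omega>) {i0})"
    by (rule indep_var_restrict[OF ind]) (use i0 in auto)
  have "indep_var (PiM UNIV (\<lambda>_. S)) ((\<lambda>\<xi>. \<lambda>j. if j \<in> I - {i0} then \<xi> j else c0) \<circ> (\<lambda>\<omega>. restrict (\<lambda>i. X i \<omega>) (I - {i0})))
     (PiM UNIV (\<lambda>_. S)) ((\<lambda>\<xi>. \<lambda>j. if j \<in> {i0} then \<xi> j else c0) \<circ> (\<lambda>\<omega>. restrict (\<lambda>i. X i \<omega>) {i0}))"
    by (rule indep_var_compose[OF iv ext_meas[OF c0] ext_meas[OF c0]])
  moreover have "(\<lambda>\<xi>. \<lambda>j. if j \<in> I - {i0} then \<xi> j else c0) \<circ> (\<lambda>\<omega>. restrict (\<lambda>i. X i \<omega>) (I - {i0})) = (\<lambda>\<omega>. \<lambda>j. if j \<in> I - {i0} then X j \<omega> else c0)"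
    by (auto simp: fun_eq_iff)
  moreover have "(\<lambda>\<xi>. \<lambda>j. if j \<in> {i0} then \<xi> j else c0) \<circ> (\<lambda>\<omega>. restrict (\<lambda>i. X i \<omega>) {i0}) = (\<lambda>\<omega>. \<lambda>j. if j \<in> {i0} then X j \<omega> else c0)"
    by (auto simp: fun_eq_iff)
  ultimately show ?thesis by simp
qed

locale fw_setting =
  fixes K :: "'a::euclidean_space set" and D \<beta> G \<sigma> :: real
    and loss :: "nat \<Rightarrow> 'a \<Rightarrow> real" and grad :: "nat \<Rightarrow> 'a \<Rightarrow> 'a"
    and M :: "'m measure" and S :: "'r measure" and X :: "nat + nat \<times> nat \<Rightarrow> 'm \<Rightarrow> 'r"
    and orc :: "nat \<Rightarrow> 'a \<Rightarrow> 'r \<Rightarrow> 'a" and A :: "'r \<Rightarrow> nat \<Rightarrow> (nat \<Rightarrow> 'a) \<Rightarrow> 'a"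
    and R :: "nat \<Rightarrow> real" and N T :: nat
  assumes K_compact: "compact K" and K_convex: "convex K" and K_zero: "0 \<in> K"
    and diam: "\<forall>x\<in>K. \<forall>x'\<in>K. norm (x - x') \<le> D"
    and loss_convex: "\<forall>t\<in>{1..T}. convex_on K (loss t)"
    and loss_grad: "\<forall>t\<in>{1..T}. \<forall>x\<in>K. (loss t has_derivative (\<lambda>h. grad t x \<bullet> h)) (at x within K)"
    and grad_bound: "\<forall>t\<in>{1..T}. \<forall>x\<in>K. norm (grad t x) \<le> G"
    and smooth: "0 \<le> \<beta>" "\<forall>t\<in>{1..T}. \<forall>x\<in>K. \<forall>x'\<in>K. norm (grad t x - grad t x') \<le> \<beta> * norm (x - x')"
    and M: "prob_space M"
    and indep: "prob_space.indep_vars M (\<lambda>_. S) X (Inl ` {1..N} \<union> Inr ` ({1..T} \<times> {1..N}))"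
    and orc_meas: "\<forall>t. (\<lambda>(x, w). orc t x w) \<in> borel \<Otimes>\<^sub>M S \<rightarrow>\<^sub>M borel"
    and unbiased: "\<forall>t\<in>{1..T}. \<forall>i\<in>{1..N}. \<forall>x\<in>K.
                     integrable M (\<lambda>\<omega>. orc t x (X (Inr (t, i)) \<omega>)) \<and>
                     (\<integral>\<omega>. orc t x (X (Inr (t, i)) \<omega>) \<partial>M) = grad t x"
    and oracle_bound: "0 \<le> \<sigma>" "\<forall>t\<in>{1..T}. \<forall>i\<in>{1..N}. \<forall>x\<in>K. \<forall>\<omega>\<in>space M.
                     (norm (orc t x (X (Inr (t, i)) \<omega>)))\<^sup>2 \<le> \<sigma>\<^sup>2"
    and A_meas: "\<forall>t. (\<lambda>(r, g). A r t g) \<in> S \<Otimes>\<^sub>M PiM UNIV (\<lambda>_::nat. borel) \<rightarrow>\<^sub>M borel"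
    and olo: "\<forall>i\<in>{1..N}. hp_olo M K \<sigma> A (X (Inl i)) R"
    and N: "N \<ge> 1"
begin

interpretation P: prob_space M by (rule M)

definition "II = Inl ` {1..N} \<union> Inr ` ({1..T} \<times> {1..N})"
definition "c0 = (SOME c. c \<in> space S)"
definition "Xh \<omega> = (\<lambda>j. if j \<in> II then X j \<omega> else c0)"
definition "mf \<xi> i t = meta_fw A orc (\<lambda>i. \<xi> (Inl i)) (\<lambda>t i. \<xi> (Inr (t, i))) i t"
definition "gs \<xi> k s = orc s (mf \<xi> k s) (\<xi> (Inr (s, Suc k)))"
definition "yo \<xi> k t = A (\<xi> (Inl (Suc k))) t (gs \<xi> k)"
definition "PP = PiM UNIV (\<lambda>_::nat + nat \<times> nat. S)"

lemma indep': "P.indep_vars (\<lambda>_. S) X II"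
  using indep by (simp add: II_def)

lemma X_meas: "j \<in> II \<Longrightarrow> X j \<in> M \<rightarrow>\<^sub>M S"
  using indep' unfolding P.indep_vars_def by auto

lemma c0: "c0 \<in> space S"
proof -
  have "Inl 1 \<in> II" using N by (auto simp: II_def)
  from X_meas[OF this] obtain \<omega> where "\<omega> \<in> space M" using P.not_empty by blast
  with X_meas[OF \<open>Inl 1 \<in> II\<close>] have "X (Inl 1) \<omega> \<in> space S" by (auto simp: measurable_def)
  then show ?thesis unfolding c0_def by (rule someI)
qed

lemma Xh_meas: "Xh \<in> M \<rightarrow>\<^sub>M PP"
  unfolding PP_def Xh_def
proof (rule measurable_PiM_single')
  fix j show "(\<lambda>\<omega>. if j \<in> II then X j \<omega> else c0) \<in> M \<rightarrow>\<^sub>M S"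
    by (cases "j \<in> II") (auto simp: c0 X_meas)
next
  show "(\<lambda>\<omega> j. if j \<in> II then X j \<omega> else c0) \<in> space M \<rightarrow> (UNIV \<rightarrow>\<^sub>E space S)"
    using X_meas c0 by (auto simp: measurable_def Pi_iff)
qed

lemma AK: "\<forall>r t g. A r t g \<in> K" and causal: "olo_causal A"
  using olo N unfolding hp_olo_def by auto

lemma mf_K: "mf \<xi> i t \<in> K"
  unfolding mf_def by (rule meta_fw_in_K[OF K_convex K_zero AK])

lemma yo_K: "yo \<xi> k t \<in> K"
  unfolding yo_def using AK by auto

lemma comp_meas: "(\<lambda>\<xi>. \<xi> j) \<in> PP \<rightarrow>\<^sub>M S"
  unfolding PP_def by simp

lemma mf_meas: "(\<lambda>\<xi>. mf \<xi> i t) \<in> borel_measurable PP"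
  unfolding mf_def
  by (rule meta_fw_meas[OF orc_meas A_meas]) (auto simp: comp_meas)

lemma gs_meas: "(\<lambda>\<xi>. gs \<xi> k s) \<in> borel_measurable PP"
proof -
  have "(\<lambda>\<xi>. (mf \<xi> k s, \<xi> (Inr (s, Suc k)))) \<in> PP \<rightarrow>\<^sub>M borel \<Otimes>\<^sub>M S"
    using mf_meas comp_meas by (intro measurable_Pair) auto
  from measurable_comp[OF this orc_meas[rule_format, of s]] show ?thesis
    by (simp add: comp_def gs_def)
qed

lemma gs_seq_meas: "(\<lambda>\<xi>. gs \<xi> k) \<in> PP \<rightarrow>\<^sub>M PiM UNIV (\<lambda>_::nat. borel)"
  by (rule measurable_PiM_single') (auto simp: gs_meas space_PiM)

lemma yo_meas: "(\<lambda>\<xi>. yo \<xi> k t) \<in> borel_measurable PP"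
proof -
  have "(\<lambda>\<xi>. (\<xi> (Inl (Suc k)), gs \<xi> k)) \<in> PP \<rightarrow>\<^sub>M S \<Otimes>\<^sub>M PiM UNIV (\<lambda>_::nat. borel)"
    using gs_seq_meas comp_meas by (intro measurable_Pair) auto
  from measurable_comp[OF this A_meas[rule_format, of t]] show ?thesis
    by (simp add: comp_def yo_def)
qed

lemma grad_cont: "t \<in> {1..T} \<Longrightarrow> continuous_on K (grad t)"
proof -
  assume t: "t \<in> {1..T}"
  have "lipschitz_on \<beta> K (grad t)"
    using smooth t unfolding lipschitz_on_def by (auto simp: dist_norm)
  then show ?thesis by (rule lipschitz_on_continuous_on)
qed

lemma grad_comp_meas:
  assumes t: "t \<in> {1..T}" and f: "f \<in> borel_measurable N'" and fK: "\<And>x. x \<in> space N' \<Longrightarrow> f x \<in> K"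
  shows "(\<lambda>x. grad t (f x)) \<in> borel_measurable N'"
proof -
  have "(\<lambda>x. indicator K x *\<^sub>R grad t x) \<in> borel_measurable borel"
    by (rule borel_measurable_continuous_on_indicator[OF _ grad_cont[OF t]])
       (simp add: K_compact compact_imp_closed)
  from measurable_comp[OF f this] have "(\<lambda>x. indicator K (f x) *\<^sub>R grad t (f x)) \<in> borel_measurable N'"
    by (simp add: comp_def)
  then show ?thesis
    by (rule measurable_cong[THEN iffD1, rotated]) (use fK in \<open>auto simp: indicator_def\<close>)
qed

lemma mf_local:
  assumes "\<forall>j\<in>{1..k}. \<xi> (Inl j) = \<xi>' (Inl j)" "\<forall>s\<in>{1..<t}. \<forall>j\<in>{1..k}. \<xi> (Inr (s, j)) = \<xi>' (Inr (s, j))" "t' \<le> t"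
  shows "mf \<xi> k t' = mf \<xi>' k t'"
  unfolding mf_def by (rule meta_fw_local[OF causal]) (use assms in auto)

lemma gs_local:
  assumes "\<forall>j\<in>{1..k}. \<xi> (Inl j) = \<xi>' (Inl j)" "\<forall>s\<in>{1..<t}. \<forall>j\<in>{1..Suc k}. \<xi> (Inr (s, j)) = \<xi>' (Inr (s, j))"
    and s: "s \<in> {1..<t}"
  shows "gs \<xi> k s = gs \<xi>' k s"
proof -
  have "mf \<xi> k s = mf \<xi>' k s" by (rule mf_local[where t=t]) (use assms in auto)
  moreover have "\<xi> (Inr (s, Suc k)) = \<xi>' (Inr (s, Suc k))" using assms by auto
  ultimately show ?thesis by (simp add: gs_def)
qed

lemma yo_local:
  assumes "\<forall>j\<in>{1..Suc k}. \<xi> (Inl j) = \<xi>' (Inl j)" "\<forall>s\<in>{1..<t}. \<forall>j\<in>{1..Suc k}. \<xi> (Inr (s, j)) = \<xi>' (Inr (s, j))"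
    and t': "t' \<le> t"
  shows "yo \<xi> k t' = yo \<xi>' k t'"
proof -
  have "A (\<xi> (Inl (Suc k))) t' (gs \<xi> k) = A (\<xi> (Inl (Suc k))) t' (gs \<xi>' k)"
    using causal unfolding olo_causal_def
    by (intro causal[unfolded olo_causal_def, rule_format] ballI gs_local[where t=t]) (use assms in auto)
  moreover have "\<xi> (Inl (Suc k)) = \<xi>' (Inl (Suc k))" using assms by auto
  ultimately show ?thesis by (simp add: yo_def)
qed

lemma gs_all:
  assumes "\<forall>j\<in>{1..k}. \<xi> (Inl j) = \<xi>' (Inl j)" "\<forall>s j. \<xi> (Inr (s, j)) = \<xi>' (Inr (s, j))"
  shows "gs \<xi> k = gs \<xi>' k"
proof
  fix s
  have "mf \<xi> k s = mf \<xi>' k s" by (rule mf_local[where t=s]) (use assms in auto)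
  then show "gs \<xi> k s = gs \<xi>' k s" using assms by (simp add: gs_def)
qed

lemma K_ne: "K \<noteq> {}" using K_zero by auto

lemma sum_loss_cont: "continuous_on K (\<lambda>y. \<Sum>t=1..T. loss t y)"
proof (intro continuous_on_sum)
  fix t assume t: "t \<in> {1..T}"
  show "continuous_on K (loss t)"
    unfolding continuous_on_eq_continuous_within
  proof
    fix x assume x: "x \<in> K"
    have "(loss t has_derivative (\<lambda>h. grad t x \<bullet> h)) (at x within K)" using loss_grad t x by auto
    then show "continuous (at x within K) (loss t)" by (rule has_derivative_continuous)
  qed
qed

definition "xs = (SOME x. x \<in> K \<and> (\<forall>y\<in>K. (\<Sum>t=1..T. loss t x) \<le> (\<Sum>t=1..T. loss t y)))"

lemma xs: "xs \<in> K" "\<And>y. y \<in> K \<Longrightarrow> (\<Sum>t=1..T. loss t xs) \<le> (\<Sum>t=1..T. loss t y)"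
proof -
  obtain x where "x \<in> K" "\<forall>y\<in>K. (\<Sum>t=1..T. loss t x) \<le> (\<Sum>t=1..T. loss t y)"
    using continuous_attains_inf[OF K_compact K_ne sum_loss_cont] by blast
  then have "xs \<in> K \<and> (\<forall>y\<in>K. (\<Sum>t=1..T. loss t xs) \<le> (\<Sum>t=1..T. loss t y))"
    unfolding xs_def by (rule someI[where P="\<lambda>x. x \<in> K \<and> _ x", OF conjI])
  then show "xs \<in> K" "\<And>y. y \<in> K \<Longrightarrow> (\<Sum>t=1..T. loss t xs) \<le> (\<Sum>t=1..T. loss t y)" by auto
qed

lemma INF_xs: "(INF y\<in>K. \<Sum>t=1..T. loss t y) = (\<Sum>t=1..T. loss t xs)"
proof (rule antisym)
  show "(INF y\<in>K. \<Sum>t=1..T. loss t y) \<le> (\<Sum>t=1..T. loss t xs)"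
  proof (rule cINF_lower[OF _ xs(1)])
    show "bdd_below ((\<lambda>y. \<Sum>t=1..T. loss t y) ` K)" unfolding bdd_below_def using xs(2) by auto
  qed
  show "(\<Sum>t=1..T. loss t xs) \<le> (INF y\<in>K. \<Sum>t=1..T. loss t y)"
    by (rule cINF_greatest[OF K_ne xs(2)])
qed

definition "dd \<xi> k t = (grad t (mf \<xi> k t) - gs \<xi> k t) \<bullet> (yo \<xi> k t - xs)"
definition "Sm \<xi> k n = (\<Sum>t=1..n. dd \<xi> k t)"

lemma dd_local:
  assumes "\<forall>j\<in>{1..Suc k}. \<xi> (Inl j) = \<xi>' (Inl j)" "\<forall>s\<in>{1..<t}. \<forall>j\<in>{1..Suc k}. \<xi> (Inr (s, j)) = \<xi>' (Inr (s, j))"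
    and t': "t' \<in> {1..<t}"
  shows "dd \<xi> k t' = dd \<xi>' k t'"
proof -
  have "mf \<xi> k t' = mf \<xi>' k t'" by (rule mf_local[where t=t]) (use assms in auto)
  moreover have "gs \<xi> k t' = gs \<xi>' k t'" by (rule gs_local[where t=t]) (use assms in auto)
  moreover have "yo \<xi> k t' = yo \<xi>' k t'" by (rule yo_local[where t=t]) (use assms in auto)
  ultimately show ?thesis by (simp add: dd_def)
qed

lemma Sm_local:
  assumes "\<forall>j\<in>{1..Suc k}. \<xi> (Inl j) = \<xi>' (Inl j)" "\<forall>s\<in>{1..<t}. \<forall>j\<in>{1..Suc k}. \<xi> (Inr (s, j)) = \<xi>' (Inr (s, j))"
    and n: "n < t"
  shows "Sm \<xi> k n = Sm \<xi>' k n"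
  unfolding Sm_def by (rule sum.cong[OF refl], rule dd_local[where t=t]) (use assms in auto)

lemma dd_meas: "n \<in> {1..T} \<Longrightarrow> (\<lambda>\<xi>. dd \<xi> k n) \<in> borel_measurable PP"
  unfolding dd_def
  by (intro borel_measurable_inner borel_measurable_diff grad_comp_meas mf_meas gs_meas yo_meas borel_measurable_const)
     (auto simp: mf_K)

lemma Sm_meas: "n \<le> T \<Longrightarrow> (\<lambda>\<xi>. Sm \<xi> k n) \<in> borel_measurable PP"
  unfolding Sm_def by (intro borel_measurable_sum dd_meas) auto

end

context fw_setting begin

interpretation P: prob_space M by (rule M)

lemma INF_lin_le:
  "(INF y\<in>K. \<Sum>t=1..n. g t \<bullet> y) \<le> (\<Sum>t=1..n. g t \<bullet> (x::'a))" if "x \<in> K"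
proof (rule cINF_lower[OF _ that])
  have "continuous_on K (\<lambda>y. \<Sum>t=1..n. g t \<bullet> y)" by (intro continuous_intros)
  then have "compact ((\<lambda>y. \<Sum>t=1..n. g t \<bullet> y) ` K)" by (rule compact_continuous_image[OF _ K_compact])
  then show "bdd_below ((\<lambda>y. \<Sum>t=1..n. g t \<bullet> y) ` K)"
    by (intro bounded_imp_bdd_below compact_imp_bounded)
qed

lemma small_imp_zero:
  fixes x :: real
  assumes "\<And>e. 0 < e \<Longrightarrow> e < 1 \<Longrightarrow> x \<le> e"
  shows "x \<le> 0"
proof (rule field_le_epsilon)
  fix e :: real assume e: "0 < e"
  have "x \<le> min e (1/2)" by (rule assms) (use e in auto)
  then show "x \<le> 0 + e" by simp
qed

definition "Yv j0 \<omega> = (\<lambda>j. if j \<in> II - {j0} then X j \<omega> else c0)"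
definition "Zv j0 \<omega> = (\<lambda>j. if j \<in> {j0} then X j \<omega> else c0)"
definition "mrg j0 y z = (\<lambda>j. if j = j0 then z j0 else y j)"

lemma Xh_mrg: "j0 \<in> II \<Longrightarrow> Xh \<omega> = mrg j0 (Yv j0 \<omega>) (Zv j0 \<omega>)"
  by (auto simp: Xh_def mrg_def Yv_def Zv_def fun_eq_iff)

lemma ind_YZ: "j0 \<in> II \<Longrightarrow> P.indep_var PP (Yv j0) PP (Zv j0)"
  unfolding PP_def Yv_def[abs_def] Zv_def[abs_def]
  by (rule P.indep_split[OF indep' _ c0])

lemma iter: "j0 \<in> II \<Longrightarrow> h \<in> borel_measurable (PP \<Otimes>\<^sub>M PP) \<Longrightarrow>
  (\<integral>\<^sup>+\<omega>. h (Yv j0 \<omega>, Zv j0 \<omega>) \<partial>M) = (\<integral>\<^sup>+\<omega>. (\<integral>\<^sup>+\<omega>'. h (Yv j0 \<omega>, Zv j0 \<omega>') \<partial>M) \<partial>M)"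
  by (rule P.indep_nn_integral_iter[OF ind_YZ])

lemma Yv_meas: "j0 \<in> II \<Longrightarrow> Yv j0 \<in> M \<rightarrow>\<^sub>M PP" and Zv_meas: "j0 \<in> II \<Longrightarrow> Zv j0 \<in> M \<rightarrow>\<^sub>M PP"
  using ind_YZ by (auto dest: P.indep_var_rv1 P.indep_var_rv2)

lemma Yv_space: "j0 \<in> II \<Longrightarrow> \<omega> \<in> space M \<Longrightarrow> Yv j0 \<omega> \<in> space PP"
  using Yv_meas by (auto simp: measurable_def)

lemma regret_null:
  assumes k: "k < N"
  shows "{\<omega> \<in> space M. R T < (\<Sum>t=1..T. gs (Xh \<omega>) k t \<bullet> (yo (Xh \<omega>) k t - xs))} \<in> sets M"
    and "emeasure M {\<omega> \<in> space M. R T < (\<Sum>t=1..T. gs (Xh \<omega>) k t \<bullet> (yo (Xh \<omega>) k t - xs))} = 0"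
proof -
  define j0 where "j0 = (Inl (Suc k) :: nat + nat \<times> nat)"
  have j0: "j0 \<in> II" using k by (auto simp: II_def j0_def)
  define H where "H = (\<lambda>p. \<Sum>t=1..T. gs (fst p) k t \<bullet> (A (snd p j0) t (gs (fst p) k) - xs))"
  have Hm: "H \<in> borel_measurable (PP \<Otimes>\<^sub>M PP)"
  proof -
    have "(\<lambda>p. A (snd p j0) t (gs (fst p) k)) \<in> borel_measurable (PP \<Otimes>\<^sub>M PP)" for t
    proof -
      have "(\<lambda>p. (snd p j0, gs (fst p) k)) \<in> PP \<Otimes>\<^sub>M PP \<rightarrow>\<^sub>M S \<Otimes>\<^sub>M PiM UNIV (\<lambda>_::nat. borel)"
        by (intro measurable_Pair measurable_compose[OF measurable_snd comp_meas]
                  measurable_compose[OF measurable_fst gs_seq_meas])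
      from measurable_comp[OF this A_meas[rule_format, of t]] show ?thesis by (simp add: comp_def)
    qed
    then show ?thesis unfolding H_def
      by (intro borel_measurable_sum borel_measurable_inner borel_measurable_diff borel_measurable_const
            measurable_compose[OF measurable_fst gs_meas]) auto
  qed
  define h where "h = (\<lambda>p. indicator {p. R T < H p} p :: ennreal)"
  have hm: "h \<in> borel_measurable (PP \<Otimes>\<^sub>M PP)"
    unfolding h_def using Hm by measurable
  have Heq: "(\<Sum>t=1..T. gs (Xh \<omega>) k t \<bullet> (yo (Xh \<omega>) k t - xs)) = H (Yv j0 \<omega>, Zv j0 \<omega>)" for \<omega>
  proof -
    have g: "gs (Xh \<omega>) k = gs (Yv j0 \<omega>) k"
      unfolding Xh_mrg[OF j0] by (rule gs_all) (auto simp: mrg_def j0_def)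
    have "yo (Xh \<omega>) k t = A (Zv j0 \<omega> j0) t (gs (Yv j0 \<omega>) k)" for t
      unfolding yo_def g by (simp add: Xh_mrg[OF j0] mrg_def j0_def)
    then show ?thesis by (simp add: H_def g)
  qed
  have Bm: "{\<omega> \<in> space M. R T < H (Yv j0 \<omega>, Zv j0 \<omega>)} \<in> sets M"
    using Hm Yv_meas[OF j0] Zv_meas[OF j0] by measurable
  then show "{\<omega> \<in> space M. R T < (\<Sum>t=1..T. gs (Xh \<omega>) k t \<bullet> (yo (Xh \<omega>) k t - xs))} \<in> sets M"
    unfolding Heq .
  have inner: "(\<integral>\<^sup>+\<omega>'. h (Yv j0 \<omega>, Zv j0 \<omega>') \<partial>M) = 0" if \<omega>: "\<omega> \<in> space M" for \<omega>
  proof -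
    define g where "g = gs (Yv j0 \<omega>) k"
    define B' where "B' = {\<omega>' \<in> space M. R T < H (Yv j0 \<omega>, Zv j0 \<omega>')}"
    have B'm: "B' \<in> sets M"
    proof -
      have "(\<lambda>\<omega>'. (Yv j0 \<omega>, Zv j0 \<omega>')) \<in> M \<rightarrow>\<^sub>M PP \<Otimes>\<^sub>M PP"
        using Yv_space[OF j0 \<omega>] Zv_meas[OF j0] by (intro measurable_Pair) auto
      then show ?thesis unfolding B'_def using Hm by measurable
    qed
    have "(\<integral>\<^sup>+\<omega>'. h (Yv j0 \<omega>, Zv j0 \<omega>') \<partial>M) = (\<integral>\<^sup>+\<omega>'. indicator B' \<omega>' \<partial>M)"
      by (rule nn_integral_cong) (auto simp: h_def B'_def indicator_def)
    also have "\<dots> = emeasure M B'" using B'm by simp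
    also have "\<dots> = 0"
    proof -
      have hp: "hp_olo M K \<sigma> A (X j0) R" using olo k by (auto simp: j0_def)
      have gb: "\<forall>s\<in>{1..T}. (norm (g s))\<^sup>2 \<le> \<sigma>\<^sup>2"
      proof
        fix s assume s: "s \<in> {1..T}"
        have "Inr (s, Suc k) \<in> II - {j0}" using s k by (auto simp: II_def j0_def)
        then have "g s = orc s (mf (Yv j0 \<omega>) k s) (X (Inr (s, Suc k)) \<omega>)"
          by (simp add: g_def gs_def Yv_def)
        then show "(norm (g s))\<^sup>2 \<le> \<sigma>\<^sup>2" using oracle_bound(2) s k \<omega> mf_K by auto
      qed
      have "measure M B' \<le> 0"
      proof (rule small_imp_zero)
        fix e :: real assume e: "0 < e" "e < 1"
        from hp[unfolded hp_olo_def] e gb obtain E where E: "E \<in> sets M" "measure M E \<ge> 1 - e"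
          and EP: "\<forall>\<omega>'\<in>E. olo_regret K g (\<lambda>t. A (X j0 \<omega>') t g) T \<le> R T"
          unfolding with_prob_at_least_def by blast
        have "B' \<subseteq> space M - E"
        proof
          fix \<omega>' assume w: "\<omega>' \<in> B'"
          have Zj: "Zv j0 \<omega>' j0 = X j0 \<omega>'" by (simp add: Zv_def)
          have "R T < (\<Sum>t=1..T. g t \<bullet> (A (X j0 \<omega>') t g - xs))"
            using w by (simp add: B'_def H_def g_def Zj)
          also have "\<dots> = (\<Sum>t=1..T. g t \<bullet> A (X j0 \<omega>') t g) - (\<Sum>t=1..T. g t \<bullet> xs)"
            by (simp add: inner_diff_right sum_subtractf)
          also have "\<dots> \<le> olo_regret K g (\<lambda>t. A (X j0 \<omega>') t g) T"
            unfolding olo_regret_def using INF_lin_le[OF xs(1), where n=T and g=g] by simp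
          finally have "\<omega>' \<notin> E" using EP by auto
          then show "\<omega>' \<in> space M - E" using w by (auto simp: B'_def)
        qed
        then have "measure M B' \<le> measure M (space M - E)"
          using E(1) by (intro P.finite_measure_mono) auto
        also have "\<dots> = 1 - measure M E" using E by (simp add: P.prob_compl)
        finally show "measure M B' \<le> e" using E by simp
      qed
      then have "measure M B' = 0" by (simp add: antisym)
      then show ?thesis by (simp add: P.emeasure_eq_measure)
    qed
    finally show ?thesis .
  qed
  have "emeasure M {\<omega> \<in> space M. R T < H (Yv j0 \<omega>, Zv j0 \<omega>)} = (\<integral>\<^sup>+\<omega>. h (Yv j0 \<omega>, Zv j0 \<omega>) \<partial>M)"
  proof -
    have "emeasure M {\<omega> \<in> space M. R T < H (Yv j0 \<omega>, Zv j0 \<omega>)} = (\<integral>\<^sup>+\<omega>. indicator {\<omega> \<in> space M. R T < H (Yv j0 \<omega>, Zv j0 \<omega>)} \<omega> \<partial>M)"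
      using Bm by simp
    also have "\<dots> = (\<integral>\<^sup>+\<omega>. h (Yv j0 \<omega>, Zv j0 \<omega>) \<partial>M)"
      by (rule nn_integral_cong) (auto simp: h_def indicator_def)
    finally show ?thesis .
  qed
  also have "\<dots> = (\<integral>\<^sup>+\<omega>. (\<integral>\<^sup>+\<omega>'. h (Yv j0 \<omega>, Zv j0 \<omega>') \<partial>M) \<partial>M)" by (rule iter[OF j0 hm])
  also have "\<dots> = (\<integral>\<^sup>+\<omega>. 0 \<partial>M)" by (rule nn_integral_cong) (simp add: inner)
  finally show "emeasure M {\<omega> \<in> space M. R T < (\<Sum>t=1..T. gs (Xh \<omega>) k t \<bullet> (yo (Xh \<omega>) k t - xs))} = 0"
    unfolding Heq by simp
qed

end

context fw_setting begin

interpretation P: prob_space M by (rule M)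

lemma mrg_meas: "(\<lambda>p. mrg j0 (fst p) (snd p)) \<in> PP \<Otimes>\<^sub>M PP \<rightarrow>\<^sub>M PP"
  unfolding PP_def mrg_def
proof (rule measurable_PiM_single')
  fix j
  show "(\<lambda>p. if j = j0 then snd p j0 else fst p j) \<in> Pi\<^sub>M UNIV (\<lambda>_. S) \<Otimes>\<^sub>M Pi\<^sub>M UNIV (\<lambda>_. S) \<rightarrow>\<^sub>M S"
    by (cases "j = j0") auto
next
  show "(\<lambda>p j. if j = j0 then snd p j0 else fst p j) \<in> space (Pi\<^sub>M UNIV (\<lambda>_. S) \<Otimes>\<^sub>M Pi\<^sub>M UNIV (\<lambda>_. S)) \<rightarrow> (UNIV \<rightarrow>\<^sub>E space S)"
    by (auto simp: space_pair_measure space_PiM PiE_iff)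
qed

definition "cc = (\<sigma> + G) * D"

lemma D_nonneg: "0 \<le> D" using diam K_zero by (metis norm_ge_zero order_trans)

lemma hoeff_step:
  assumes x: "x \<in> K" and v: "norm v \<le> D" and t: "t \<in> {1..T}" and i: "i \<in> {1..N}" and l: "0 < l"
  shows "(\<integral>\<^sup>+\<omega>. ennreal (exp (l * ((grad t x - orc t x (X (Inr (t, i)) \<omega>)) \<bullet> v))) \<partial>M) \<le> ennreal (exp (l\<^sup>2 * cc\<^sup>2 / 2))"
proof -
  define f where "f = (\<lambda>\<omega>. (grad t x - orc t x (X (Inr (t, i)) \<omega>)) \<bullet> v)"
  have II: "Inr (t, i) \<in> II" using t i by (auto simp: II_def)
  have om: "(\<lambda>\<omega>. orc t x (X (Inr (t, i)) \<omega>)) \<in> borel_measurable M"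
  proof -
    have "(\<lambda>\<omega>. (x, X (Inr (t, i)) \<omega>)) \<in> M \<rightarrow>\<^sub>M borel \<Otimes>\<^sub>M S"
      using X_meas[OF II] by (intro measurable_Pair) auto
    from measurable_comp[OF this orc_meas[rule_format, of t]] show ?thesis by (simp add: comp_def)
  qed
  have fm: "f \<in> borel_measurable M" unfolding f_def using om by measurable
  have bnd: "\<bar>f \<omega>\<bar> \<le> cc" if "\<omega> \<in> space M" for \<omega>
  proof -
    have o: "norm (orc t x (X (Inr (t, i)) \<omega>)) \<le> \<sigma>"
      using oracle_bound(2) t i x that oracle_bound(1) by (metis power2_le_imp_le)
    have gg: "norm (grad t x) \<le> G" using grad_bound t x by auto
    then have G0: "0 \<le> G + \<sigma>" using oracle_bound(1) norm_ge_zero[of "grad t x"] by linarith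
    have "\<bar>f \<omega>\<bar> \<le> norm (grad t x - orc t x (X (Inr (t, i)) \<omega>)) * norm v"
      unfolding f_def by (rule Cauchy_Schwarz_ineq2)
    also have "\<dots> \<le> (G + \<sigma>) * D"
      using o gg v G0 by (intro mult_mono) (auto intro: order_trans[OF norm_triangle_ineq4])
    finally show ?thesis by (simp add: cc_def add.commute)
  qed
  interpret Hf: interval_bounded_random_variable M f "- cc" cc
  proof unfold_locales
    show "f \<in> borel_measurable M" by (rule fm)
    show "AE x in M. f x \<in> {- cc..cc}"
    proof (rule AE_I2)
      fix x assume "x \<in> space M" then show "f x \<in> {- cc..cc}" using bnd[of x] by (auto simp: abs_le_iff)
    qed
  qed
  have int: "integrable M (\<lambda>\<omega>. orc t x (X (Inr (t, i)) \<omega>))" and ev: "(\<integral>\<omega>. orc t x (X (Inr (t, i)) \<omega>) \<partial>M) = grad t x"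
    using unbiased t i x by auto
  have "P.expectation f = P.expectation (\<lambda>\<omega>. grad t x \<bullet> v - orc t x (X (Inr (t, i)) \<omega>) \<bullet> v)"
    by (simp add: f_def inner_diff_left)
  also have "\<dots> = grad t x \<bullet> v - (\<integral>\<omega>. orc t x (X (Inr (t, i)) \<omega>) \<bullet> v \<partial>M)"
    using int by (subst Bochner_Integration.integral_diff) (auto simp: P.prob_space)
  also have "\<dots> = 0" using int ev by simp
  finally have E0: "P.expectation f = 0" .
  have "(\<integral>\<^sup>+\<omega>. ennreal (exp (l * f \<omega>)) \<partial>M) \<le> ennreal (exp (l\<^sup>2 * (cc - - cc)\<^sup>2 / 8))"
    by (rule Hf.Hoeffdings_lemma_nn_integral_0[OF l E0])
  also have "l\<^sup>2 * (cc - - cc)\<^sup>2 / 8 = l\<^sup>2 * cc\<^sup>2 / 2" by (simp add: power2_eq_square algebra_simps)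
  finally show ?thesis by (simp add: f_def)
qed

lemma Sm_Xh_meas: "n \<le> T \<Longrightarrow> (\<lambda>\<omega>. Sm (Xh \<omega>) k n) \<in> borel_measurable M"
  using measurable_comp[OF Xh_meas Sm_meas] by (simp add: comp_def)

lemma mgf_bound:
  assumes k: "k < N" and l: "0 < l"
  shows "n \<le> T \<Longrightarrow> (\<integral>\<^sup>+\<omega>. ennreal (exp (l * Sm (Xh \<omega>) k n)) \<partial>M) \<le> ennreal (exp (real n * (l\<^sup>2 * cc\<^sup>2 / 2)))"
proof (induction n)
  case 0
  have "(\<integral>\<^sup>+\<omega>. ennreal (exp (l * Sm (Xh \<omega>) k 0)) \<partial>M) = (\<integral>\<^sup>+\<omega>. 1 \<partial>M)" by (simp add: Sm_def)
  also have "\<dots> = 1" using P.emeasure_space_1 by simp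
  finally show ?case by simp
next
  case (Suc n)
  define j0 where "j0 = (Inr (Suc n, Suc k) :: nat + nat \<times> nat)"
  have j0: "j0 \<in> II" using k Suc.prems by (auto simp: II_def j0_def)
  define q where "q = l\<^sup>2 * cc\<^sup>2 / 2"
  define h where "h = (\<lambda>p. ennreal (exp (l * Sm (mrg j0 (fst p) (snd p)) k (Suc n))))"
  have hm: "h \<in> borel_measurable (PP \<Otimes>\<^sub>M PP)"
    unfolding h_def using measurable_comp[OF mrg_meas Sm_meas[OF Suc.prems]] by (simp add: comp_def)
  have agr: "\<forall>j\<in>{1..Suc k}. mrg j0 y z (Inl j) = y (Inl j)"
    "\<forall>s\<in>{1..<Suc n}. \<forall>j\<in>{1..Suc k}. mrg j0 y z (Inr (s, j)) = y (Inr (s, j))" for y z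
    by (auto simp: mrg_def j0_def)
  have split: "Sm (mrg j0 y z) k (Suc n) = Sm y k n +
      (grad (Suc n) (mf y k (Suc n)) - orc (Suc n) (mf y k (Suc n)) (z j0)) \<bullet> (yo y k (Suc n) - xs)" for y z
  proof -
    have "Sm (mrg j0 y z) k (Suc n) = Sm (mrg j0 y z) k n + dd (mrg j0 y z) k (Suc n)"
      by (simp add: Sm_def)
    moreover have "Sm (mrg j0 y z) k n = Sm y k n" by (rule Sm_local[OF agr]) auto
    moreover have "mf (mrg j0 y z) k (Suc n) = mf y k (Suc n)" by (rule mf_local[where t="Suc n"]) (auto simp: mrg_def j0_def)
    moreover have "yo (mrg j0 y z) k (Suc n) = yo y k (Suc n)" by (rule yo_local[OF agr]) auto
    moreover have "mrg j0 y z (Inr (Suc n, Suc k)) = z j0" by (simp add: mrg_def j0_def)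
    ultimately show ?thesis by (simp add: dd_def gs_def)
  qed
  have Sm_eq: "Sm (Xh \<omega>) k n = Sm (Yv j0 \<omega>) k n" for \<omega>
    unfolding Xh_mrg[OF j0] by (rule Sm_local[OF agr]) auto
  have "(\<integral>\<^sup>+\<omega>. ennreal (exp (l * Sm (Xh \<omega>) k (Suc n))) \<partial>M) = (\<integral>\<^sup>+\<omega>. h (Yv j0 \<omega>, Zv j0 \<omega>) \<partial>M)"
    by (simp add: h_def Xh_mrg[OF j0])
  also have "\<dots> = (\<integral>\<^sup>+\<omega>. (\<integral>\<^sup>+\<omega>'. h (Yv j0 \<omega>, Zv j0 \<omega>') \<partial>M) \<partial>M)" by (rule iter[OF j0 hm])
  also have "\<dots> \<le> (\<integral>\<^sup>+\<omega>. ennreal (exp (l * Sm (Xh \<omega>) k n)) * ennreal (exp q) \<partial>M)"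
  proof (rule nn_integral_mono)
    fix \<omega> assume \<omega>: "\<omega> \<in> space M"
    define y where "y = Yv j0 \<omega>"
    define x where "x = mf y k (Suc n)"
    define v where "v = yo y k (Suc n) - xs"
    have xK: "x \<in> K" by (simp add: x_def mf_K)
    have vD: "norm v \<le> D" using diam yo_K xs(1) by (simp add: v_def)
    have "(\<integral>\<^sup>+\<omega>'. h (y, Zv j0 \<omega>') \<partial>M)
        = (\<integral>\<^sup>+\<omega>'. ennreal (exp (l * Sm y k n)) * ennreal (exp (l * ((grad (Suc n) x - orc (Suc n) x (X (Inr (Suc n, Suc k)) \<omega>')) \<bullet> v))) \<partial>M)"
    proof (rule nn_integral_cong)
      fix \<omega>' assume "\<omega>' \<in> space M"
      have z: "Zv j0 \<omega>' j0 = X (Inr (Suc n, Suc k)) \<omega>'" by (simp add: Zv_def j0_def)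
      show "h (y, Zv j0 \<omega>') = ennreal (exp (l * Sm y k n)) * ennreal (exp (l * ((grad (Suc n) x - orc (Suc n) x (X (Inr (Suc n, Suc k)) \<omega>')) \<bullet> v)))"
        unfolding h_def fst_conv snd_conv split z
        by (simp add: x_def v_def distrib_left exp_add ennreal_mult)
    qed
    also have "\<dots> = ennreal (exp (l * Sm y k n)) * (\<integral>\<^sup>+\<omega>'. ennreal (exp (l * ((grad (Suc n) x - orc (Suc n) x (X (Inr (Suc n, Suc k)) \<omega>')) \<bullet> v))) \<partial>M)"
    proof (rule nn_integral_cmult)
      have II: "Inr (Suc n, Suc k) \<in> II" using j0 by (simp add: j0_def)
      have "(\<lambda>\<omega>'. (x, X (Inr (Suc n, Suc k)) \<omega>')) \<in> M \<rightarrow>\<^sub>M borel \<Otimes>\<^sub>M S"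
        using X_meas[OF II] by (intro measurable_Pair) auto
      from measurable_comp[OF this orc_meas[rule_format, of "Suc n"]]
      have "(\<lambda>\<omega>'. orc (Suc n) x (X (Inr (Suc n, Suc k)) \<omega>')) \<in> borel_measurable M" by (simp add: comp_def)
      then show "(\<lambda>\<omega>'. ennreal (exp (l * ((grad (Suc n) x - orc (Suc n) x (X (Inr (Suc n, Suc k)) \<omega>')) \<bullet> v)))) \<in> borel_measurable M"
        by measurable
    qed
    also have "\<dots> \<le> ennreal (exp (l * Sm y k n)) * ennreal (exp q)"
      by (intro mult_left_mono hoeff_step[OF xK vD _ _ l, unfolded q_def[symmetric]]) (use Suc.prems k in auto)
    finally show "(\<integral>\<^sup>+\<omega>'. h (Yv j0 \<omega>, Zv j0 \<omega>') \<partial>M) \<le> ennreal (exp (l * Sm (Xh \<omega>) k n)) * ennreal (exp q)"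
      by (simp add: y_def Sm_eq)
  qed
  also have "\<dots> = (\<integral>\<^sup>+\<omega>. ennreal (exp (l * Sm (Xh \<omega>) k n)) \<partial>M) * ennreal (exp q)"
  proof (rule nn_integral_multc)
    have "n \<le> T" using Suc.prems by simp
    from Sm_Xh_meas[OF this, of k] show "(\<lambda>\<omega>. ennreal (exp (l * Sm (Xh \<omega>) k n))) \<in> borel_measurable M"
      by measurable
  qed
  also have "\<dots> \<le> ennreal (exp (real n * q)) * ennreal (exp q)"
    using Suc by (intro mult_right_mono) (auto simp: q_def)
  also have "\<dots> = ennreal (exp (real (Suc n) * q))"
    by (simp add: ennreal_mult[symmetric] exp_add[symmetric] algebra_simps)
  finally show ?case by (simp add: q_def)
qed

end

lemma alg_l1: fixes a thr :: real assumes "a > 0" shows "- (thr / a) * thr + (thr / a)\<^sup>2 * a / 2 = - (thr\<^sup>2 / (2 * a))"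
  using assms by (simp add: power2_eq_square field_simps)
lemma alg_l2: fixes T c L :: real assumes "T > 0" "c > 0" shows "c\<^sup>2 * (2 * T * L) / (2 * T * c\<^sup>2) = L"
  using assms by simp
lemma alg_l3: fixes r n :: real assumes "0 < r" "r < 1" "1 \<le> n" shows "1 < 4 * n / r"
  using assms by (simp add: less_divide_eq_1_pos)

context fw_setting begin

interpretation P: prob_space M by (rule M)

lemma dd_bound:
  assumes \<omega>: "\<omega> \<in> space M" and k: "k < N" and t: "t \<in> {1..T}"
  shows "dd (Xh \<omega>) k t \<le> cc"
proof -
  have II: "Inr (t, Suc k) \<in> II" using t k by (auto simp: II_def)
  define x where "x = mf (Xh \<omega>) k t"
  have gs: "gs (Xh \<omega>) k t = orc t x (X (Inr (t, Suc k)) \<omega>)" using II by (simp add: gs_def Xh_def x_def)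
  have o: "norm (orc t x (X (Inr (t, Suc k)) \<omega>)) \<le> \<sigma>"
  proof -
    have "Suc k \<in> {1..N}" using k by auto
    then have "(norm (orc t x (X (Inr (t, Suc k)) \<omega>)))\<^sup>2 \<le> \<sigma>\<^sup>2"
      using oracle_bound(2) t mf_K \<omega> unfolding x_def by blast
    then show ?thesis using oracle_bound(1) by (rule power2_le_imp_le)
  qed
  have gg: "norm (grad t x) \<le> G" using grad_bound t mf_K by (auto simp: x_def)
  then have G0: "0 \<le> G + \<sigma>" using oracle_bound(1) norm_ge_zero[of "grad t x"] by linarith
  have v: "norm (yo (Xh \<omega>) k t - xs) \<le> D" using diam yo_K xs(1) by simp
  have "dd (Xh \<omega>) k t \<le> norm (grad t x - orc t x (X (Inr (t, Suc k)) \<omega>)) * norm (yo (Xh \<omega>) k t - xs)"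
    unfolding dd_def gs x_def[symmetric] by (rule order_trans[OF _ Cauchy_Schwarz_ineq2]) simp
  also have "\<dots> \<le> (G + \<sigma>) * D"
    using o gg v G0 by (intro mult_mono) (auto intro: order_trans[OF norm_triangle_ineq4])
  finally show ?thesis by (simp add: cc_def add.commute)
qed

lemma Sm_bound: "\<omega> \<in> space M \<Longrightarrow> k < N \<Longrightarrow> Sm (Xh \<omega>) k T \<le> real T * cc"
  unfolding Sm_def using sum_mono[of "{1..T}" "\<lambda>t. dd (Xh \<omega>) k t" "\<lambda>_. cc"] dd_bound by auto

lemma cc_nonneg: "T \<ge> 1 \<Longrightarrow> 0 \<le> cc"
proof -
  assume "T \<ge> 1"
  then have "norm (grad 1 0) \<le> G" using grad_bound K_zero by auto
  then have "0 \<le> G" using norm_ge_zero[of "grad 1 0"] by linarith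
  then show ?thesis using oracle_bound(1) D_nonneg by (simp add: cc_def)
qed

lemma tail:
  assumes k: "k < N" and \<rho>: "0 < \<rho>" "\<rho> < 1"
  defines "thr \<equiv> cc * sqrt (2 * real T * ln (4 * real N / \<rho>))"
  shows "{\<omega> \<in> space M. thr < Sm (Xh \<omega>) k T} \<in> sets M"
    and "measure M {\<omega> \<in> space M. thr < Sm (Xh \<omega>) k T} \<le> \<rho> / (4 * real N)"
proof -
  show meas: "{\<omega> \<in> space M. thr < Sm (Xh \<omega>) k T} \<in> sets M"
    using Sm_Xh_meas[of T k] by measurable
  have lnpos: "0 < ln (4 * real N / \<rho>)"
  proof -
    have "1 < 4 * real N / \<rho>" using N \<rho> by (intro alg_l3) auto
    then show ?thesis by simp
  qed
  show "measure M {\<omega> \<in> space M. thr < Sm (Xh \<omega>) k T} \<le> \<rho> / (4 * real N)"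
  proof (cases "T = 0 \<or> cc = 0")
    case True
    have "{\<omega> \<in> space M. thr < Sm (Xh \<omega>) k T} = {}"
    proof -
      have "thr = 0" using True by (auto simp: thr_def)
      moreover have "Sm (Xh \<omega>) k T \<le> 0" if "\<omega> \<in> space M" for \<omega>
        using Sm_bound[OF that k] True by auto
      ultimately show ?thesis by force
    qed
    then show ?thesis using \<rho> by (simp only: measure_empty) simp
  next
    case False
    have T1: "T \<ge> 1" using False by auto
    have ccpos: "cc > 0" using cc_nonneg[OF T1] False by auto
    define L where "L = 2 * real T * ln (4 * real N / \<rho>)"
    have Lpos: "0 < L" unfolding L_def using T1 lnpos by simp
    have thrL: "thr = cc * sqrt L" unfolding thr_def L_def ..
    have l0pos: "0 < thr" unfolding thrL using ccpos Lpos by simp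
    define a where "a = real T * cc\<^sup>2"
    have apos: "0 < a" unfolding a_def using T1 ccpos by simp
    define l where "l = thr / a"
    have lpos: "0 < l" unfolding l_def using l0pos apos by simp
    have fm: "(\<lambda>\<omega>. Sm (Xh \<omega>) k T) \<in> borel_measurable M" using Sm_Xh_meas[of T k] by simp
    have "emeasure M {\<omega> \<in> space M. Sm (Xh \<omega>) k T \<ge> thr}
        \<le> ennreal (exp (- l * thr)) * (\<integral>\<^sup>+\<omega>. ennreal (exp (l * Sm (Xh \<omega>) k T)) * indicator (space M) \<omega> \<partial>M)"
    proof (rule Chernoff_ineq_nn_integral_ge[OF lpos])
      show "space M \<in> sets M" by simp
      show "(\<lambda>x. Sm (Xh x) k T * indicator (space M) x) \<in> borel_measurable M"
        using fm by (intro borel_measurable_times borel_measurable_indicator) auto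
    qed
    also have "(\<integral>\<^sup>+\<omega>. ennreal (exp (l * Sm (Xh \<omega>) k T)) * indicator (space M) \<omega> \<partial>M)
             = (\<integral>\<^sup>+\<omega>. ennreal (exp (l * Sm (Xh \<omega>) k T)) \<partial>M)"
      by (rule nn_integral_cong) auto
    also have "ennreal (exp (- l * thr)) * \<dots> \<le> ennreal (exp (- l * thr)) * ennreal (exp (real T * (l\<^sup>2 * cc\<^sup>2 / 2)))"
      by (intro mult_left_mono mgf_bound[OF k lpos]) auto
    also have "\<dots> = ennreal (exp (- l * thr + real T * (l\<^sup>2 * cc\<^sup>2 / 2)))"
      unfolding exp_add by (rule ennreal_mult[symmetric]) auto
    also have "real T * (l\<^sup>2 * cc\<^sup>2 / 2) = l\<^sup>2 * a / 2" by (simp add: a_def)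
    also have "- l * thr + l\<^sup>2 * a / 2 = - (thr\<^sup>2 / (2 * a))" unfolding l_def by (rule alg_l1[OF apos])
    also have "thr\<^sup>2 = cc\<^sup>2 * L" unfolding thrL using Lpos by (simp add: power_mult_distrib)
    also have "cc\<^sup>2 * L / (2 * a) = ln (4 * real N / \<rho>)"
      unfolding a_def L_def using alg_l2[of "real T" cc "ln (4 * real N / \<rho>)"] T1 ccpos by (simp add: mult_ac)
    also have "exp (- ln (4 * real N / \<rho>)) = \<rho> / (4 * real N)"
      using N \<rho> by (simp add: exp_minus)
    finally have em: "emeasure M {\<omega> \<in> space M. Sm (Xh \<omega>) k T \<ge> thr} \<le> ennreal (\<rho> / (4 * real N))" .
    have meas2: "{\<omega> \<in> space M. Sm (Xh \<omega>) k T \<ge> thr} \<in> sets M" using fm by measurable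
    have "measure M {\<omega> \<in> space M. thr < Sm (Xh \<omega>) k T} \<le> measure M {\<omega> \<in> space M. Sm (Xh \<omega>) k T \<ge> thr}"
      by (rule P.finite_measure_mono[OF _ meas2]) auto
    also have "\<dots> \<le> \<rho> / (4 * real N)"
      using em \<rho> N by (simp add: P.emeasure_eq_measure)
    finally show ?thesis .
  qed
qed

end

context fw_setting begin

interpretation P: prob_space M by (rule M)

lemma main:
  assumes \<rho>: "0 < \<rho>" "\<rho> < 1"
  shows "with_prob_at_least M (1 - \<rho>) (\<lambda>\<omega>.
           (\<Sum>t=1..T. loss t (meta_fw A orc (\<lambda>i. X (Inl i) \<omega>) (\<lambda>t i. X (Inr (t, i)) \<omega>) N t))
             - (INF y\<in>K. \<Sum>t=1..T. loss t y)
           \<le> 2 * \<beta> * D\<^sup>2 * real T / real N + R T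
              + (\<sigma> + G) * D * sqrt (2 * real T * ln (4 * real N / \<rho>)))"
proof -
  define thr where "thr = cc * sqrt (2 * real T * ln (4 * real N / \<rho>))"
  define B1 where "B1 = (\<lambda>k. {\<omega> \<in> space M. R T < (\<Sum>t=1..T. gs (Xh \<omega>) k t \<bullet> (yo (Xh \<omega>) k t - xs))})"
  define B2 where "B2 = (\<lambda>k. {\<omega> \<in> space M. thr < Sm (Xh \<omega>) k T})"
  have B1m: "B1 k \<in> sets M" and B1z: "measure M (B1 k) = 0" if "k < N" for k
    using regret_null[OF that] by (auto simp: B1_def P.emeasure_eq_measure)
  have B2m: "B2 k \<in> sets M" and B2b: "measure M (B2 k) \<le> \<rho> / (4 * real N)" if "k < N" for k
    using tail[OF that \<rho>] by (auto simp: B2_def thr_def)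
  define Bad where "Bad = (\<Union>k\<in>{..<N}. B1 k \<union> B2 k)"
  have Badm: "Bad \<in> sets M" unfolding Bad_def using B1m B2m by auto
  have "measure M Bad \<le> (\<Sum>k\<in>{..<N}. measure M (B1 k \<union> B2 k))"
    unfolding Bad_def by (rule measure_UNION_le) (use B1m B2m in auto)
  also have "\<dots> \<le> (\<Sum>k\<in>{..<N}. \<rho> / (4 * real N))"
  proof (rule sum_mono)
    fix k assume "k \<in> {..<N}"
    then have k: "k < N" by simp
    have "measure M (B1 k \<union> B2 k) \<le> measure M (B1 k) + measure M (B2 k)"
      by (rule measure_Un_le[OF B1m[OF k] B2m[OF k]])
    then show "measure M (B1 k \<union> B2 k) \<le> \<rho> / (4 * real N)" using B1z[OF k] B2b[OF k] by simp
  qed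
  also have "\<dots> = \<rho> / 4" using N by simp
  finally have badb: "measure M Bad \<le> \<rho> / 4" .
  define E where "E = space M - Bad"
  have Em: "E \<in> sets M" unfolding E_def using Badm by auto
  have Eb: "measure M E \<ge> 1 - \<rho>"
    unfolding E_def using P.prob_compl[OF Badm] badb \<rho> by simp
  show ?thesis
    unfolding with_prob_at_least_def
  proof (intro bexI[OF _ Em] conjI ballI)
    show "1 - \<rho> \<le> measure M E" by (rule Eb)
    fix \<omega> assume \<omega>E: "\<omega> \<in> E"
    then have \<omega>: "\<omega> \<in> space M" by (simp add: E_def)
    have good: "(\<Sum>t=1..T. gs (Xh \<omega>) k t \<bullet> (yo (Xh \<omega>) k t - xs)) \<le> R T \<and> Sm (Xh \<omega>) k T \<le> thr"
      if "k < N" for k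
      using \<omega>E that by (auto simp: E_def Bad_def B1_def B2_def not_less)
    define u where "u = (\<lambda>i. Xh \<omega> (Inl i))"
    define z where "z = (\<lambda>t i. Xh \<omega> (Inr (t, i)))"
    have hyp: "\<forall>i. Suc i \<le> N \<longrightarrow> (\<Sum>t=1..T. grad t (meta_fw A orc u z i t) \<bullet>
        (A (u (Suc i)) t (\<lambda>s. orc s (meta_fw A orc u z i s) (z s (Suc i))) - xs)) \<le> R T + thr"
    proof (intro allI impI)
      fix i assume i: "Suc i \<le> N"
      have eq: "(\<Sum>t=1..T. grad t (meta_fw A orc u z i t) \<bullet>
          (A (u (Suc i)) t (\<lambda>s. orc s (meta_fw A orc u z i s) (z s (Suc i))) - xs))
        = (\<Sum>t=1..T. gs (Xh \<omega>) i t \<bullet> (yo (Xh \<omega>) i t - xs)) + Sm (Xh \<omega>) i T"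
        unfolding Sm_def dd_def sum.distrib[symmetric]
        by (rule sum.cong[OF refl]) (simp add: u_def z_def mf_def[symmetric] gs_def[abs_def] yo_def inner_diff_left)
      show "(\<Sum>t=1..T. grad t (meta_fw A orc u z i t) \<bullet>
          (A (u (Suc i)) t (\<lambda>s. orc s (meta_fw A orc u z i s) (z s (Suc i))) - xs)) \<le> R T + thr"
        unfolding eq using good[of i] i by simp
    qed
    have fw: "(\<Sum>t=1..T. loss t (meta_fw A orc u z N t)) - (\<Sum>t=1..T. loss t xs)
        \<le> R T + thr + 2 * \<beta> * D\<^sup>2 * real T / real N"
      by (rule fw_bound[OF K_convex K_zero AK diam loss_convex loss_grad smooth xs(1) hyp N])
    have loc: "meta_fw A orc u z N t = meta_fw A orc (\<lambda>i. X (Inl i) \<omega>) (\<lambda>t i. X (Inr (t, i)) \<omega>) N t"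
      if "t \<in> {1..T}" for t
      by (rule meta_fw_local[OF causal, where t="Suc T"]) (use that in \<open>auto simp: u_def z_def Xh_def II_def\<close>)
    have "(\<Sum>t=1..T. loss t (meta_fw A orc (\<lambda>i. X (Inl i) \<omega>) (\<lambda>t i. X (Inr (t, i)) \<omega>) N t))
        = (\<Sum>t=1..T. loss t (meta_fw A orc u z N t))"
      by (rule sum.cong[OF refl]) (simp add: loc)
    then show "(\<Sum>t=1..T. loss t (meta_fw A orc (\<lambda>i. X (Inl i) \<omega>) (\<lambda>t i. X (Inr (t, i)) \<omega>) N t))
             - (INF y\<in>K. \<Sum>t=1..T. loss t y)
           \<le> 2 * \<beta> * D\<^sup>2 * real T / real N + R T
              + (\<sigma> + G) * D * sqrt (2 * real T * ln (4 * real N / \<rho>))"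
      using fw unfolding INF_xs by (simp add: thr_def cc_def)
  qed
qed

end

theorem proposition2:
  fixes K :: "'a::euclidean_space set" and D \<beta> G \<sigma> \<rho> :: real
    and loss :: "nat \<Rightarrow> 'a \<Rightarrow> real" and grad :: "nat \<Rightarrow> 'a \<Rightarrow> 'a"
    and M :: "'m measure" and S :: "'r measure" and X :: "nat + nat \<times> nat \<Rightarrow> 'm \<Rightarrow> 'r"
    and orc :: "nat \<Rightarrow> 'a \<Rightarrow> 'r \<Rightarrow> 'a" and A :: "'r \<Rightarrow> nat \<Rightarrow> (nat \<Rightarrow> 'a) \<Rightarrow> 'a"
    and R :: "nat \<Rightarrow> real" and N T :: nat
  assumes K_compact: "compact K" and K_convex: "convex K" and K_zero: "0 \<in> K"
    and diam: "\<forall>x\<in>K. \<forall>x'\<in>K. norm (x - x') \<le> D"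
    and loss_convex: "\<forall>t\<in>{1..T}. convex_on K (loss t)"
    and loss_grad: "\<forall>t\<in>{1..T}. \<forall>x\<in>K. (loss t has_derivative (\<lambda>h. grad t x \<bullet> h)) (at x within K)"
    and grad_bound: "\<forall>t\<in>{1..T}. \<forall>x\<in>K. norm (grad t x) \<le> G"
    and smooth: "0 \<le> \<beta>" "\<forall>t\<in>{1..T}. \<forall>x\<in>K. \<forall>x'\<in>K. norm (grad t x - grad t x') \<le> \<beta> * norm (x - x')"
    and M: "prob_space M"
    and indep: "prob_space.indep_vars M (\<lambda>_. S) X (Inl ` {1..N} \<union> Inr ` ({1..T} \<times> {1..N}))"
    and orc_meas: "\<forall>t. (\<lambda>(x, w). orc t x w) \<in> borel \<Otimes>\<^sub>M S \<rightarrow>\<^sub>M borel"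
    and unbiased: "\<forall>t\<in>{1..T}. \<forall>i\<in>{1..N}. \<forall>x\<in>K.
                     integrable M (\<lambda>\<omega>. orc t x (X (Inr (t, i)) \<omega>)) \<and>
                     (\<integral>\<omega>. orc t x (X (Inr (t, i)) \<omega>) \<partial>M) = grad t x"
    and oracle_bound: "0 \<le> \<sigma>" "\<forall>t\<in>{1..T}. \<forall>i\<in>{1..N}. \<forall>x\<in>K. \<forall>\<omega>\<in>space M.
                     (norm (orc t x (X (Inr (t, i)) \<omega>)))\<^sup>2 \<le> \<sigma>\<^sup>2"
    and A_meas: "\<forall>t. (\<lambda>(r, g). A r t g) \<in> S \<Otimes>\<^sub>M PiM UNIV (\<lambda>_::nat. borel) \<rightarrow>\<^sub>M borel"
    and olo: "\<forall>i\<in>{1..N}. hp_olo M K \<sigma> A (X (Inl i)) R"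
    and N: "N \<ge> 1"
    and \<rho>: "0 < \<rho>" "\<rho> < 1"
  shows "with_prob_at_least M (1 - \<rho>) (\<lambda>\<omega>.
           (\<Sum>t=1..T. loss t (meta_fw A orc (\<lambda>i. X (Inl i) \<omega>) (\<lambda>t i. X (Inr (t, i)) \<omega>) N t))
             - (INF y\<in>K. \<Sum>t=1..T. loss t y)
           \<le> 2 * \<beta> * D\<^sup>2 * real T / real N + R T
              + (\<sigma> + G) * D * sqrt (2 * real T * ln (4 * real N / \<rho>)))"
  proof -
  interpret fw_setting K D \<beta> G \<sigma> loss grad M S X orc A R N T
    by (rule fw_setting.intro; fact)
  show ?thesis by (rule main[OF \<rho>])
qed

end
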